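(* For every finite set $S$, the monotone map $\eta_S \colon 1 \star S \to [1]^S$ exhibits $[1]^S$ as the free semilattice on the poset $1\star S$. That is, for every semilattice $A$ and every monotone map $f \colon 1 \star S \to A$ (with respect to the order $x\le y \iff x\vee y=y$ on $A$), there is a unique semilattice homomorphism $f^\dagger \colon [1]^S \to A$ such that $f = f^\dagger \circ \eta_S$.
   Context: A (join-)semilattice is a set with an associative, commutative, idempotent binary operation $\vee$; a semilattice homomorphism is a map preserving $\vee$ (no bounds required). Every semilattice is a poset via $x \le y \iff x \vee y = y$. $[1]=\{0<1\}$ is the two-element linear order with $\vee=\max$, and $[1]^S$ carries the pointwise semilattice structure. For a set $S$ (viewed as a discrete poset), $1 \star S$ denotes the poset obtained by adjoining a new minimum element $\bot$ to $S$. The map $\eta_S \colon 1\star S \to [1]^S$ sends $\bot$ to the constant function $0$ and $i \in S$ to the function that is $1$ at $i$ and $0$ elsewhere. *)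

theory Defs
  imports "HOL-Library.FuncSet"
begin

text \<open>The poset 1 * S: carrier None (the new bottom) plus Some i for i in S.\<close>
definition cone :: "'a set \<Rightarrow> 'a option set" where
  "cone S = insert None (Some ` S)"

definition cone_le :: "'a option \<Rightarrow> 'a option \<Rightarrow> bool" where
  "cone_le x y \<longleftrightarrow> x = None \<or> x = y"

text \<open>[1]^S: functions S -> {0<1} (bool, False = 0), represented as
  functions vanishing outside S; the join is pointwise (sup on bool = or).\<close>
definition cube :: "'a set \<Rightarrow> ('a \<Rightarrow> bool) set" where
  "cube S = {g. \<forall>x. x \<notin> S \<longrightarrow> \<not> g x}"

definition eta :: "'a option \<Rightarrow> ('a \<Rightarrow> bool)" where
  "eta x = (case x of None \<Rightarrow> (\<lambda>_. False) | Some i \<Rightarrow> (\<lambda>k. k = i))"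

definition mono_into_sl :: "'a set \<Rightarrow> ('b \<Rightarrow> 'b \<Rightarrow> 'b) \<Rightarrow> ('a option \<Rightarrow> 'b) \<Rightarrow> bool" where
  "mono_into_sl S j f \<longleftrightarrow>
     (\<forall>x\<in>cone S. \<forall>y\<in>cone S. cone_le x y \<longrightarrow> j (f x) (f y) = f y)"

definition sl_hom_on :: "('c::sup) set \<Rightarrow> ('b \<Rightarrow> 'b \<Rightarrow> 'b) \<Rightarrow> ('c \<Rightarrow> 'b) \<Rightarrow> bool" where
  "sl_hom_on P j h \<longleftrightarrow> (\<forall>g\<in>P. \<forall>g'\<in>P. h (sup g g') = j (h g) (h g'))"

end

theory Submission
  imports Defs
begin

lemma cfi:
  assumes "semilattice j"
  shows "comp_fun_idem (\<lambda>i. j (f i))"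
proof -
  interpret js: semilattice j by fact
  show ?thesis
    by unfold_locales (auto simp: fun_eq_iff js.left_commute js.left_idem)
qed

theorem mainTheorem1:
  fixes S :: "'a set" and j :: "'b \<Rightarrow> 'b \<Rightarrow> 'b" and f :: "'a option \<Rightarrow> 'b"
  assumes "finite S"
    and "semilattice j"
    and "mono_into_sl S j f"
  shows "\<exists>!h. h \<in> extensional (cube S) \<and> sl_hom_on (cube S) j h
              \<and> (\<forall>x\<in>cone S. f x = h (eta x))"
proof -
  interpret js: semilattice j by fact
  interpret cf: comp_fun_idem "\<lambda>i. j (f (Some i))" using cfi[OF assms(2)] .
  define F where "F A = Finite_Set.fold (\<lambda>i. j (f (Some i))) (f None) A" for A
  have F0: "F {} = f None" by (simp add: F_def)
  have Fi: "F (insert a A) = j (f (Some a)) (F A)" if "finite A" for a A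
    using that by (simp add: F_def cf.fold_insert_idem)
  have Fbot: "j (f None) (F B) = F B" if "finite B" for B
    using that
  proof (induction B rule: finite_induct)
    case empty then show ?case by (simp add: F0)
  next
    case (insert b B)
    then show ?case by (metis Fi js.left_commute)
  qed
  have Fun: "F (A \<union> B) = j (F A) (F B)" if "finite A" "finite B" for A B
    using that(1)
  proof (induction A rule: finite_induct)
    case empty then show ?case by (simp add: F0 Fbot that(2))
  next
    case (insert a A)
    then show ?case by (simp add: Fi that(2) js.assoc)
  qed
  define h where "h g = (if g \<in> cube S then F {i\<in>S. g i} else undefined)" for g
  have cube_eq: "g = (\<lambda>k. k \<in> {i\<in>S. g i})" if "g \<in> cube S" for g
    using that by (auto simp: cube_def fun_eq_iff)
  have hext: "h \<in> extensional (cube S)" by (simp add: h_def extensional_def)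
  have supc: "sup g g' \<in> cube S" if "g \<in> cube S" "g' \<in> cube S" for g g'
    using that by (auto simp: cube_def)
  have hhom: "sl_hom_on (cube S) j h"
    unfolding sl_hom_on_def
  proof (intro ballI)
    fix g g' assume g: "g \<in> cube S" and g': "g' \<in> cube S"
    have "{i\<in>S. sup g g' i} = {i\<in>S. g i} \<union> {i\<in>S. g' i}" by auto
    then show "h (sup g g') = j (h g) (h g')"
      using g g' supc[OF g g'] assms(1) by (simp add: h_def Fun)
  qed
  have etac: "eta x \<in> cube S" if "x \<in> cone S" for x
    using that by (auto simp: eta_def cone_def cube_def)
  have heta: "f x = h (eta x)" if "x \<in> cone S" for x
  proof (cases x)
    case None
    then show ?thesis using etac[OF that] by (simp add: h_def eta_def F0)
  next
    case (Some a)
    with that have a: "a \<in> S" by (auto simp: cone_def)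
    have "{i\<in>S. i = a} = {a}" using a by auto
    moreover have "j (f None) (f (Some a)) = f (Some a)"
      using assms(3) a by (auto simp: mono_into_sl_def cone_def cone_le_def)
    ultimately show ?thesis using etac[OF that] Some
      by (simp add: h_def eta_def Fi F0 js.commute)
  qed
  show ?thesis
  proof (rule ex1I[of _ h])
    show "h \<in> extensional (cube S) \<and> sl_hom_on (cube S) j h \<and> (\<forall>x\<in>cone S. f x = h (eta x))"
      using hext hhom heta by blast
  next
    fix h' assume H: "h' \<in> extensional (cube S) \<and> sl_hom_on (cube S) j h' \<and> (\<forall>x\<in>cone S. f x = h' (eta x))"
    have ind: "h' (\<lambda>k. k \<in> A) = F A" if "A \<subseteq> S" for A
    proof -
      have "finite A" using that assms(1) finite_subset by blast
      then show ?thesis using that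
      proof (induction A rule: finite_induct)
        case empty
        have "None \<in> cone S" by (simp add: cone_def)
        then have "f None = h' (eta None)" using H by blast
        then show ?case by (simp add: eta_def F0)
      next
        case (insert a A)
        have c1: "eta (Some a) \<in> cube S" using insert by (intro etac) (auto simp: cone_def)
        have c2: "(\<lambda>k. k \<in> A) \<in> cube S" using insert by (auto simp: cube_def)
        have eq: "(\<lambda>k. k \<in> insert a A) = sup (eta (Some a)) (\<lambda>k. k \<in> A)"
          by (auto simp: eta_def fun_eq_iff)
        have "Some a \<in> cone S" using insert by (auto simp: cone_def)
        then have fa: "f (Some a) = h' (eta (Some a))" using H by blast
        have "h' (\<lambda>k. k \<in> insert a A) = j (h' (eta (Some a))) (h' (\<lambda>k. k \<in> A))"
          using H c1 c2 unfolding eq sl_hom_on_def by blast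
        then show ?case using insert fa by (simp add: Fi)
      qed
    qed
    show "h' = h"
    proof
      fix g show "h' g = h g"
      proof (cases "g \<in> cube S")
        case True
        have "h' g = h' (\<lambda>k. k \<in> {i\<in>S. g i})" using cube_eq[OF True] by simp
        also have "\<dots> = F {i\<in>S. g i}" by (rule ind) auto
        finally show ?thesis using True by (simp add: h_def)
      next
        case False
        then show ?thesis using H hext by (simp add: extensional_def)
      qed
    qed
  qed
qed

end
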